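(* For integers $i\ge0$, $j\ge0$ and real $k$: (a) $b_{i,j+1,k}=\sum_{r=0}^{i-1}\binom{i}{r}b_{r,j,k}$; (b) $b_{i,j,k+1}=\sum_{r=0}^{i}\binom{i}{r}b_{r,j,k}$; (c) $b_{i+1,j+1,k}=(j+1)\sum_{r=0}^{i}\binom{i}{r}b_{r,j,k}+k\,b_{i,j+1,k}$; (d) $b_{i+1,j+1,k}=(j+1)\sum_{r=j}^{i}b_{r,j,k}\,(j+k+1)^{i-r}$; (e) $b_{i+1,j+1,k}=(j+1)\sum_{r=j}^{i}b_{r,j,k+1}\,k^{i-r}$.
   Context: For integers $i\ge0$, $j\ge0$ and real $k$, $b_{i,j,k}=\sum_{r=0}^{j}\binom{j}{r}(-1)^{j-r}(r+k)^i$, with the convention $0^0=1$ (used throughout, also in the powers appearing in (d) and (e)). *)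

theory Defs
  imports Complex_Main
begin

text \<open>b i j k = sum over r from 0 to j of (j choose r) (-1)^(j-r) (r+k)^i.
  Note that in Isabelle, x ^ 0 = 1 for every x, including x = 0, so the convention 0^0 = 1 holds.\<close>
definition b :: "nat \<Rightarrow> nat \<Rightarrow> real \<Rightarrow> real" where
  "b i j k = (\<Sum>r = 0..j. real (j choose r) * (-1) ^ (j - r) * (real r + k) ^ i)"

end

theory Submission
  imports Defs
begin

lemma pascal_sum:
  fixes g :: "nat \<Rightarrow> real"
  shows "(\<Sum>r = 0..Suc j. real (Suc j choose r) * g r)
       = (\<Sum>r = 0..j. real (j choose r) * (g r + g (Suc r)))"
proof -
  have A: "(\<Sum>r = 0..Suc j. real (Suc j choose r) * g r)
     = g 0 + (\<Sum>s = 0..j. real (j choose s) * g (Suc s)) + (\<Sum>s = 0..j. real (j choose Suc s) * g (Suc s))"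
    by (subst sum.atLeast0_atMost_Suc_shift) (simp add: algebra_simps sum.distrib)
  have B: "(\<Sum>r = 0..j. real (j choose r) * g r) = (\<Sum>r = 0..Suc j. real (j choose r) * g r)"
    by simp
  also have "\<dots> = g 0 + (\<Sum>s = 0..j. real (j choose Suc s) * g (Suc s))"
    unfolding sum.atLeast0_atMost_Suc_shift by simp
  finally show ?thesis using A by (simp add: algebra_simps sum.distrib)
qed

lemma b_diff: "b i (Suc j) k = b i j (k + 1) - b i j k"
proof -
  have "b i (Suc j) k = (\<Sum>r = 0..j. real (j choose r) *
      ((-1) ^ (Suc j - r) * (real r + k) ^ i + (-1) ^ (Suc j - Suc r) * (real (Suc r) + k) ^ i))"
    unfolding b_def using pascal_sum[of j "\<lambda>r. (-1) ^ (Suc j - r) * (real r + k) ^ i"]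
    by (simp add: mult.assoc)
  also have "\<dots> = (\<Sum>r = 0..j. real (j choose r) * ((-1) ^ (j - r) * (real r + (k + 1)) ^ i))
      - (\<Sum>r = 0..j. real (j choose r) * ((-1) ^ (j - r) * (real r + k) ^ i))"
    unfolding sum_subtractf[symmetric]
  proof (rule sum.cong[OF refl])
    fix r assume "r \<in> {0..j}"
    then have "Suc j - r = Suc (j - r)" by auto
    then show "real (j choose r) *
      ((-1) ^ (Suc j - r) * (real r + k) ^ i + (-1) ^ (Suc j - Suc r) * (real (Suc r) + k) ^ i)
      = real (j choose r) * ((-1) ^ (j - r) * (real r + (k + 1)) ^ i) -
         real (j choose r) * ((-1) ^ (j - r) * (real r + k) ^ i)"
      by (simp add: algebra_simps)
  qed
  finally show ?thesis unfolding b_def by (simp add: mult.assoc)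
qed

lemma b_shift: "b i j (k + 1) = (\<Sum>r = 0..i. real (i choose r) * b r j k)"
proof -
  have "b i j (k + 1) = (\<Sum>s = 0..j. real (j choose s) * (-1) ^ (j - s) *
         (\<Sum>r = 0..i. real (i choose r) * (real s + k) ^ r))"
    unfolding b_def
  proof (rule sum.cong[OF refl])
    fix s
    have "(real s + (k + 1)) ^ i = ((real s + k) + 1) ^ i" by (simp add: add.assoc)
    also have "\<dots> = (\<Sum>r = 0..i. real (i choose r) * (real s + k) ^ r)"
      by (simp add: binomial_ring atLeast0AtMost)
    finally show "real (j choose s) * (- 1) ^ (j - s) * (real s + (k + 1)) ^ i =
         real (j choose s) * (- 1) ^ (j - s) * (\<Sum>r = 0..i. real (i choose r) * (real s + k) ^ r)"
      by simp
  qed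
  also have "\<dots> = (\<Sum>r = 0..i. real (i choose r) * b r j k)"
    unfolding b_def sum_distrib_left
    by (subst sum.swap) (simp add: algebra_simps)
  finally show ?thesis .
qed

lemma b_vanish: "r < j \<Longrightarrow> b r j k = 0"
proof (induction j arbitrary: r k)
  case 0 then show ?case by simp
next
  case (Suc j)
  have "b r (Suc j) k = (\<Sum>s = 0..<r. real (r choose s) * b s j k)"
    using b_diff b_shift[of r j k]
    by (cases r) (simp_all add: sum.atLeast0_atMost_Suc atLeastLessThanSuc_atLeastAtMost[symmetric])
  also have "\<dots> = 0" using Suc by (intro sum.neutral) auto
  finally show ?case .
qed

lemma b_a: "b i (j + 1) k = (\<Sum>r = 0..<i. real (i choose r) * b r j k)"
  using b_diff b_shift[of i j k]
  by (simp add: atLeastLessThanSuc_atLeastAtMost[symmetric])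

lemma b_c: "b (i + 1) (j + 1) k = real (j + 1) * b i j (k + 1) + k * b i (j + 1) k"
proof -
  have "b (i + 1) (j + 1) k = (\<Sum>r = 0..j + 1. real (j + 1 choose r) * (- 1) ^ (j + 1 - r) * ((real r + k) ^ i * real r))
        + k * b i (j + 1) k"
    unfolding b_def sum_distrib_left sum.distrib[symmetric]
    by (rule sum.cong) (simp_all add: algebra_simps)
  also have "(\<Sum>r = 0..j + 1. real (j + 1 choose r) * (- 1) ^ (j + 1 - r) * ((real r + k) ^ i * real r))
     = (\<Sum>s = 0..j. real (j + 1 choose Suc s) * (- 1) ^ (j - s) * ((real s + 1 + k) ^ i * real (Suc s)))"
    unfolding Suc_eq_plus1[symmetric]
    by (subst sum.atLeast0_atMost_Suc_shift) (simp add: algebra_simps)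
  also have "\<dots> = (\<Sum>s = 0..j. real (j + 1) * (real (j choose s) * (- 1) ^ (j - s) * (real s + (k + 1)) ^ i))"
  proof (rule sum.cong[OF refl])
    fix s
    have "real (j + 1 choose Suc s) * real (Suc s) = real (j + 1) * real (j choose s)"
    proof -
      have "(j + 1 choose Suc s) * Suc s = (j + 1) * (j choose s)"
        by (metis Suc_eq_plus1 Suc_times_binomial_eq)
      then show ?thesis by (metis of_nat_mult)
    qed
    then show "real (j + 1 choose Suc s) * (- 1) ^ (j - s) * ((real s + 1 + k) ^ i * real (Suc s)) =
         real (j + 1) * (real (j choose s) * (- 1) ^ (j - s) * (real s + (k + 1)) ^ i)"
    proof -
      assume H: "real (j + 1 choose Suc s) * real (Suc s) = real (j + 1) * real (j choose s)"
      have "real (j + 1 choose Suc s) * (- 1) ^ (j - s) * ((real s + 1 + k) ^ i * real (Suc s))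
          = (real (j + 1 choose Suc s) * real (Suc s)) * ((- 1) ^ (j - s) * (real s + (k + 1)) ^ i)"
        by (simp only: ac_simps add.assoc)
      also have "\<dots> = real (j + 1) * (real (j choose s) * (- 1) ^ (j - s) * (real s + (k + 1)) ^ i)"
        unfolding H by (simp only: ac_simps)
      finally show ?thesis .
    qed
  qed
  also have "\<dots> = real (j + 1) * b i j (k + 1)"
    unfolding b_def sum_distrib_left by simp
  finally show ?thesis .
qed

lemma unroll:
  fixes B a :: "nat \<Rightarrow> real"
  assumes "B 0 = 0" "\<And>n. B (Suc n) = c * B n + a n"
  shows "B (Suc n) = (\<Sum>r = 0..n. a r * c ^ (n - r))"
proof (induction n)
  case 0 then show ?case using assms by simp
next
  case (Suc n)
  have "B (Suc (Suc n)) = c * (\<Sum>r = 0..n. a r * c ^ (n - r)) + a (Suc n)"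
    using assms(2) Suc by simp
  also have "\<dots> = (\<Sum>r = 0..n. a r * c ^ (Suc n - r)) + a (Suc n)"
    unfolding sum_distrib_left
    by (intro arg_cong2[where f="(+)"] sum.cong refl) (simp add: Suc_diff_le algebra_simps)
  finally show ?case by simp
qed

lemma b0: "b 0 (Suc j) k = 0"
  using b_diff[of 0 j k] by (simp add: b_def)

lemma drop_low:
  fixes f :: "nat \<Rightarrow> real"
  assumes "\<And>r. r < j \<Longrightarrow> f r = 0"
  shows "(\<Sum>r = 0..i. f r) = (\<Sum>r = j..i. f r)"
proof (cases "j \<le> i")
  case True
  have "{0..i} = {0..<j} \<union> {j..i}" using True by auto
  then have "(\<Sum>r = 0..i. f r) = (\<Sum>r = 0..<j. f r) + (\<Sum>r = j..i. f r)"
    by (simp add: sum.union_disjoint ivl_disj_int)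
  then show ?thesis using assms by simp
next
  case False
  then have "{j..i} = {}" by auto
  moreover have "(\<Sum>r = 0..i. f r) = 0" using False assms by (intro sum.neutral) auto
  ultimately show ?thesis by simp
qed

theorem mainTheorem7:
  fixes i j :: nat and k :: real
  shows "(b i (j + 1) k = (\<Sum>r = 0..<i. real (i choose r) * b r j k)) \<and>
         (b i j (k + 1) = (\<Sum>r = 0..i. real (i choose r) * b r j k)) \<and>
         (b (i + 1) (j + 1) k
           = real (j + 1) * (\<Sum>r = 0..i. real (i choose r) * b r j k) + k * b i (j + 1) k) \<and>
         (b (i + 1) (j + 1) k
           = real (j + 1) * (\<Sum>r = j..i. b r j k * (real j + k + 1) ^ (i - r))) \<and>
         (b (i + 1) (j + 1) k
           = real (j + 1) * (\<Sum>r = j..i. b r j (k + 1) * k ^ (i - r)))"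
proof (intro conjI)
  show "b i (j + 1) k = (\<Sum>r = 0..<i. real (i choose r) * b r j k)" by (rule b_a)
  show "b i j (k + 1) = (\<Sum>r = 0..i. real (i choose r) * b r j k)" by (rule b_shift)
  show "b (i + 1) (j + 1) k
           = real (j + 1) * (\<Sum>r = 0..i. real (i choose r) * b r j k) + k * b i (j + 1) k"
    using b_c b_shift by simp
  have d: "b (Suc i) (j + 1) k = (\<Sum>r = 0..i. (real (j + 1) * b r j k) * (real j + k + 1) ^ (i - r))"
  proof (rule unroll[where B="\<lambda>n. b n (j + 1) k"])
    show "b 0 (j + 1) k = 0" using b0 by simp
    fix n
    show "b (Suc n) (j + 1) k = (real j + k + 1) * b n (j + 1) k + real (j + 1) * b n j k"
    proof -
      have h: "b n j (k+1) = b n (j+1) k + b n j k" using b_diff[of n j k] by simp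
      show ?thesis using b_c[of n j k, unfolded h] by (simp add: algebra_simps)
    qed
  qed
  show "b (i + 1) (j + 1) k
           = real (j + 1) * (\<Sum>r = j..i. b r j k * (real j + k + 1) ^ (i - r))"
  proof -
    have "b (i + 1) (j + 1) k = real (j + 1) * (\<Sum>r = 0..i. b r j k * (real j + k + 1) ^ (i - r))"
      using d by (simp add: sum_distrib_left mult.assoc)
    also have "(\<Sum>r = 0..i. b r j k * (real j + k + 1) ^ (i - r)) = (\<Sum>r = j..i. b r j k * (real j + k + 1) ^ (i - r))"
      by (rule drop_low) (simp add: b_vanish)
    finally show ?thesis .
  qed
  have e: "b (Suc i) (j + 1) k = (\<Sum>r = 0..i. (real (j + 1) * b r j (k + 1)) * k ^ (i - r))"
  proof (rule unroll[where B="\<lambda>n. b n (j + 1) k"])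
    show "b 0 (j + 1) k = 0" using b0 by simp
    fix n
    show "b (Suc n) (j + 1) k = k * b n (j + 1) k + real (j + 1) * b n j (k + 1)"
      using b_c[of n j k] by (simp add: algebra_simps)
  qed
  show "b (i + 1) (j + 1) k
           = real (j + 1) * (\<Sum>r = j..i. b r j (k + 1) * k ^ (i - r))"
  proof -
    have "b (i + 1) (j + 1) k = real (j + 1) * (\<Sum>r = 0..i. b r j (k + 1) * k ^ (i - r))"
      using e by (simp add: sum_distrib_left mult.assoc)
    also have "(\<Sum>r = 0..i. b r j (k + 1) * k ^ (i - r)) = (\<Sum>r = j..i. b r j (k + 1) * k ^ (i - r))"
      by (rule drop_low) (simp add: b_vanish)
    finally show ?thesis .
  qed
qed

end
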